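(* Let $\{X_n\}_{n=-\infty}^{\infty}$ be a stationary time series taking values in a finite alphabet $\mathcal{X}$. For $k\ge1$, $n\ge0$ and $j\ge0$, define the time series $\{\tilde X^{(k,n,j)}_i\}_{i=-\infty}^{\infty}$ by $\tilde X^{(k,n,j)}_i=X_{n-\tau^k_j(n)+i}$ for $-\infty<i<\infty$. Then $\{\tilde X^{(k,n,j)}_i\}_{i=-\infty}^{\infty}$ has the same distribution as $\{X_i\}_{i=-\infty}^{\infty}$.
   Context: Notation: $X_m^n=(X_m,\dots,X_n)$. For $k\ge1$ and $n\ge0$, $\tau^k_0(n)=0$ and for $i\ge1$, $\tau^k_i(n)=\min\{t>\tau^k_{i-1}(n): X_{n-k+1-t}^{n-t}=X_{n-k+1}^n\}$, i.e. the successive times $t>0$ going backward at which the block $X_{n-k+1}^n$ reoccurs ending at position $n-t$. *)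

theory Defs
  imports "HOL-Probability.Probability"
begin

definition seq_space :: "(int \<Rightarrow> 'a) measure" where
  "seq_space = PiM UNIV (\<lambda>_. count_space UNIV)"

definition stationary :: "'b measure \<Rightarrow> (int \<Rightarrow> 'b \<Rightarrow> 'a) \<Rightarrow> bool" where
  "stationary M X \<longleftrightarrow>
     (\<forall>m::int. distr M seq_space (\<lambda>\<omega> i. X (i + m) \<omega>) = distr M seq_space (\<lambda>\<omega> i. X i \<omega>))"

text \<open>The block X_{n-k+1}^n reoccurs ending at position n - t:
  X_{n-k+1-t}^{n-t} = X_{n-k+1}^n.\<close>
definition reoccurs :: "(int \<Rightarrow> 'b \<Rightarrow> 'a) \<Rightarrow> nat \<Rightarrow> int \<Rightarrow> nat \<Rightarrow> 'b \<Rightarrow> bool" where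
  "reoccurs X k n t \<omega> \<longleftrightarrow> (\<forall>l<k. X (n - int t - int l) \<omega> = X (n - int l) \<omega>)"

text \<open>Recurrence times tau^k_j(n). Convention: if no further reoccurrence exists
  (a null event for stationary finite-alphabet processes), the value is 0.\<close>
fun tau :: "(int \<Rightarrow> 'b \<Rightarrow> 'a) \<Rightarrow> nat \<Rightarrow> int \<Rightarrow> nat \<Rightarrow> 'b \<Rightarrow> nat" where
  "tau X k n 0 \<omega> = 0"
| "tau X k n (Suc j) \<omega> =
     (if \<exists>t. t > tau X k n j \<omega> \<and> reoccurs X k n t \<omega>
      then (LEAST t. t > tau X k n j \<omega> \<and> reoccurs X k n t \<omega>)
      else 0)"

end

theory Submission
  imports Defs
begin

definition cnt :: "(nat \<Rightarrow> bool) \<Rightarrow> nat \<Rightarrow> nat" where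
  "cnt Q t = card {s\<in>{1..<t}. Q s}"

lemma cnt_Suc: "cnt Q (Suc t) = cnt Q t + (if 1 \<le> t \<and> Q t then 1 else 0)"
proof (cases "1 \<le> t \<and> Q t")
  case True
  then have "{s\<in>{1..<Suc t}. Q s} = insert t {s\<in>{1..<t}. Q s}" by auto
  then show ?thesis using True unfolding cnt_def by simp
next
  case False
  then have "{s\<in>{1..<Suc t}. Q s} = {s\<in>{1..<t}. Q s}" by (auto simp: less_Suc_eq)
  then show ?thesis using False unfolding cnt_def by simp
qed

lemma cnt_meas:
  assumes "\<And>s. Measurable.pred M (Q s)"
  shows "(\<lambda>x. cnt (\<lambda>s. Q s x) t) \<in> M \<rightarrow>\<^sub>M count_space UNIV"
proof (induct t)
  case 0 then show ?case by (simp add: cnt_def)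
next
  case (Suc t)
  note [measurable] = Suc assms
  show ?case unfolding cnt_Suc by measurable
qed

lemma cnt_unique:
  assumes "0 < t" "Q t" "0 < t'" "Q t'" "cnt Q t = cnt Q t'"
  shows "t = t'"
proof (rule ccontr)
  assume ne: "t \<noteq> t'"
  have aux: "cnt Q a < cnt Q b" if "0 < a" "Q a" "a < b" for a b
  proof -
    have "insert a {s\<in>{1..<a}. Q s} \<subseteq> {s\<in>{1..<b}. Q s}" using that by auto
    then have "card (insert a {s\<in>{1..<a}. Q s}) \<le> cnt Q b"
      unfolding cnt_def by (intro card_mono) auto
    then show ?thesis unfolding cnt_def by simp
  qed
  show False using ne aux[of t t'] aux[of t' t] assms by (cases "t < t'") auto
qed

lemma cnt_exists:
  assumes io: "\<forall>N. \<exists>t>N. Q t"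
  shows "\<exists>t>0. Q t \<and> cnt Q t = c"
proof (induct c)
  case 0
  obtain t0 where t0: "t0 > 0" "Q t0" using io by blast
  define t where "t = (LEAST t. 0 < t \<and> Q t)"
  have t: "0 < t \<and> Q t" unfolding t_def by (rule LeastI[of _ t0]) (use t0 in auto)
  have "{s\<in>{1..<t}. Q s} = {}"
  proof -
    have "\<not> (0 < s \<and> Q s)" if "s < t" for s
      using not_less_Least[of s "\<lambda>t. 0 < t \<and> Q t"] that unfolding t_def by blast
    then show ?thesis by auto
  qed
  then show ?case using t unfolding cnt_def by (intro exI[of _ t]) auto
next
  case (Suc c)
  then obtain t where t: "t>0" "Q t" "cnt Q t = c" by blast
  obtain t0 where t0: "t0 > t" "Q t0" using io by blast
  define t' where "t' = (LEAST t'. t < t' \<and> Q t')"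
  have t': "t < t' \<and> Q t'" unfolding t'_def by (rule LeastI[of _ t0]) (use t0 in auto)
  have le: "t' \<le> s" if "t < s" "Q s" for s unfolding t'_def by (rule Least_le) (use that in auto)
  have "{s\<in>{1..<t'}. Q s} = insert t {s\<in>{1..<t}. Q s}"
  proof
    show "{s\<in>{1..<t'}. Q s} \<subseteq> insert t {s\<in>{1..<t}. Q s}"
    proof
      fix s assume s: "s \<in> {s\<in>{1..<t'}. Q s}"
      have "\<not> (t < s)" using le[of s] s by auto
      then show "s \<in> insert t {s\<in>{1..<t}. Q s}" using s by auto
    qed
    show "insert t {s\<in>{1..<t}. Q s} \<subseteq> {s\<in>{1..<t'}. Q s}" using t t' by auto
  qed
  then have "cnt Q t' = Suc c" using t unfolding cnt_def by simp
  then show ?case using t t' by (intro exI[of _ t']) auto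
qed

lemma tau_inv:
  assumes io: "\<forall>N. \<exists>t>N. reoccurs X k n t \<omega>"
  shows "j \<ge> 1 \<Longrightarrow> 0 < tau X k n j \<omega> \<and> reoccurs X k n (tau X k n j \<omega>) \<omega>
     \<and> cnt (\<lambda>t. reoccurs X k n t \<omega>) (tau X k n j \<omega>) = j - 1"
proof (induct j)
  case 0 then show ?case by simp
next
  case (Suc j)
  let ?R = "\<lambda>t. reoccurs X k n t \<omega>"
  let ?a = "tau X k n j \<omega>"
  have ex: "\<exists>t. t > ?a \<and> ?R t" using io by blast
  then have eq: "tau X k n (Suc j) \<omega> = (LEAST t. ?a < t \<and> ?R t)" by simp
  define t' where "t' = (LEAST t. ?a < t \<and> ?R t)"
  obtain t0 where t0: "t0 > ?a" "?R t0" using ex by blast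
  have t': "?a < t' \<and> ?R t'" unfolding t'_def by (rule LeastI[of _ t0]) (use t0 in auto)
  have le: "t' \<le> s" if "?a < s" "?R s" for s unfolding t'_def by (rule Least_le) (use that in auto)
  show ?case
  proof (cases "j = 0")
    case True
    then have a0: "?a = 0" by simp
    have emp: "{s\<in>{1..<t'}. ?R s} = {}"
    proof (rule equals0I)
      fix s assume s: "s \<in> {s\<in>{1..<t'}. ?R s}"
      then have "?a < s" using a0 by simp
      then have "t' \<le> s" using le s by blast
      then show False using s by simp
    qed
    have c0: "cnt ?R t' = 0" unfolding cnt_def emp by simp
    have e2: "tau X k n (Suc j) \<omega> = t'" using eq t'_def by simp
    show ?thesis unfolding e2 using t' c0 a0 True by simp
  next
    case False
    then have IH: "0 < ?a" "?R ?a" "cnt ?R ?a = j - 1" using Suc by auto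
    have "{s\<in>{1..<t'}. ?R s} = insert ?a {s\<in>{1..<?a}. ?R s}"
    proof
      show "{s\<in>{1..<t'}. ?R s} \<subseteq> insert ?a {s\<in>{1..<?a}. ?R s}"
      proof
        fix s assume s: "s \<in> {s\<in>{1..<t'}. ?R s}"
        have "\<not> (?a < s)" using le[of s] s by auto
        then show "s \<in> insert ?a {s\<in>{1..<?a}. ?R s}" using s by auto
      qed
      show "insert ?a {s\<in>{1..<?a}. ?R s} \<subseteq> {s\<in>{1..<t'}. ?R s}" using IH t' by auto
    qed
    then have "cnt ?R t' = j" using IH False unfolding cnt_def by simp
    then show ?thesis using t' IH unfolding eq t'_def[symmetric] by auto
  qed
qed

lemma tau_transfer:
  "tau X k c j \<omega> = tau (\<lambda>i x. x i) k c j (\<lambda>i. X i \<omega>)"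
  by (induct j) (auto simp: reoccurs_def)

lemma space_seq: "space seq_space = UNIV"
  by (simp add: seq_space_def space_PiM)

lemma tau_meas[measurable]: "(\<lambda>x::int\<Rightarrow>'a::finite. tau (\<lambda>i x. x i) k n j x) \<in> measurable seq_space (count_space UNIV)"
proof (induct j)
  case 0 then show ?case by simp
next
  case (Suc j)
  note [measurable] = Suc
  show ?case unfolding tau.simps reoccurs_def seq_space_def
    using Suc unfolding seq_space_def by measurable
qed

lemma shift_meas[measurable]: "(\<lambda>x::int\<Rightarrow>'a::finite. \<lambda>i. x (i + m)) \<in> measurable seq_space seq_space"
  unfolding seq_space_def by (rule measurable_PiM_single') auto

lemma T_meas: "(\<lambda>x::int\<Rightarrow>'a::finite. \<lambda>i. x (c - int (tau (\<lambda>i x. x i) k c j x) + i)) \<in> measurable seq_space seq_space"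
proof -
  have "(\<lambda>x::int\<Rightarrow>'a::finite. x (c - int (tau (\<lambda>i x. x i) k c j x) + i)) \<in> seq_space \<rightarrow>\<^sub>M count_space UNIV" for i
  proof (rule measurable_compose_countable[where f="\<lambda>t x. x (c - int t + i)"])
    show "(\<lambda>x. x (c - int t + i)) \<in> seq_space \<rightarrow>\<^sub>M count_space UNIV" for t
      unfolding seq_space_def by measurable
  qed (rule tau_meas)
  then show ?thesis unfolding seq_space_def by (intro measurable_PiM_single') auto
qed


lemma shift_G:
  fixes y :: "int \<Rightarrow> 'a" and c :: int
  shows "(0 < t \<and> reoccurs (\<lambda>i x. x i) k c t (\<lambda>i. y (i + (int t - c)))
          \<and> cnt (\<lambda>s. reoccurs (\<lambda>i x. x i) k c s (\<lambda>i. y (i + (int t - c)))) t = J)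
     \<longleftrightarrow> (0 < t \<and> (\<forall>l<k. y (int t - int l) = y (- int l))
          \<and> cnt (\<lambda>u. \<forall>l<k. y (int u - int l) = y (- int l)) t = J)"
proof -
  define Rb where "Rb s = (\<forall>l<k. y (int t - int s - int l) = y (int t - int l))" for s :: nat
  define Rf where "Rf u = (\<forall>l<k. y (int u - int l) = y (- int l))" for u :: nat
  have RR: "reoccurs (\<lambda>i x. x i) k c s (\<lambda>i. y (i + (int t - c))) = Rb s" for s
    unfolding reoccurs_def Rb_def by (simp add: algebra_simps)
  have Rt: "Rb t = Rf t" unfolding Rb_def Rf_def by auto
  have cc: "cnt Rb t = cnt Rf t" if "Rf t"
  proof -
    have "{s\<in>{1..<t}. Rb s} = (\<lambda>u. t - u) ` {u\<in>{1..<t}. Rf u}"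
    proof
      show "{s\<in>{1..<t}. Rb s} \<subseteq> (\<lambda>u. t - u) ` {u\<in>{1..<t}. Rf u}"
      proof
        fix s assume s: "s \<in> {s\<in>{1..<t}. Rb s}"
        have "Rf (t - s)" unfolding Rf_def
        proof (intro allI impI)
          fix l assume l: "l < k"
          have "y (int (t - s) - int l) = y (int t - int s - int l)" using s by (simp add: of_nat_diff)
          also have "\<dots> = y (int t - int l)" using s l unfolding Rb_def by simp
          also have "\<dots> = y (- int l)" using that l unfolding Rf_def by simp
          finally show "y (int (t - s) - int l) = y (- int l)" .
        qed
        moreover have "s = t - (t - s)" using s by simp
        ultimately show "s \<in> (\<lambda>u. t - u) ` {u\<in>{1..<t}. Rf u}" using s by (intro image_eqI[where x="t - s"]) auto
      qed
      show "(\<lambda>u. t - u) ` {u\<in>{1..<t}. Rf u} \<subseteq> {s\<in>{1..<t}. Rb s}"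
      proof
        fix s assume "s \<in> (\<lambda>u. t - u) ` {u\<in>{1..<t}. Rf u}"
        then obtain u where u: "u \<in> {1..<t}" "Rf u" and su: "s = t - u" by auto
        have "Rb s" unfolding Rb_def
        proof (intro allI impI)
          fix l assume l: "l < k"
          have "y (int t - int s - int l) = y (int u - int l)" using u su by (simp add: of_nat_diff)
          also have "\<dots> = y (- int l)" using u l unfolding Rf_def by simp
          also have "\<dots> = y (int t - int l)" using that l unfolding Rf_def by simp
          finally show "y (int t - int s - int l) = y (int t - int l)" .
        qed
        then show "s \<in> {s\<in>{1..<t}. Rb s}" using u su by auto
      qed
    qed
    moreover have "inj_on (\<lambda>u. t - u) {u\<in>{1..<t}. Rf u}" by (rule inj_onI) auto
    ultimately show ?thesis unfolding cnt_def by (simp add: card_image)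
  qed
  show ?thesis unfolding RR Rb_def[symmetric] Rf_def[symmetric] using Rt cc by auto
qed

locale spath =
  fixes P :: "(int \<Rightarrow> 'a::finite) measure"
  assumes prob: "prob_space P"
    and sets_P: "sets P = sets seq_space"
    and stat: "\<And>m. distr P seq_space (\<lambda>x i. x (i + m)) = P"
begin

sublocale prob_space P by (rule prob)

lemma space_P: "space P = UNIV"
  using sets_eq_imp_space_eq[OF sets_P] space_seq by simp

lemma meas_P: "measurable P N = measurable seq_space N"
  by (rule measurable_cong_sets[OF sets_P refl])

lemma stat_em:
  assumes "A \<in> sets seq_space"
  shows "emeasure P ((\<lambda>x i. x (i + m)) -` A) = emeasure P A"
proof -
  have "emeasure P A = emeasure (distr P seq_space (\<lambda>x i. x (i + m))) A" using stat by simp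
  also have "\<dots> = emeasure P ((\<lambda>x i. x (i + m)) -` A \<inter> space P)"
    by (rule emeasure_distr) (use assms in \<open>simp_all add: meas_P\<close>)
  finally show ?thesis by (simp add: space_P)
qed

lemma pre_sets:
  assumes "A \<in> sets seq_space"
  shows "(\<lambda>x::int\<Rightarrow>'a. \<lambda>i. x (i + m)) -` A \<in> sets P"
proof -
  have "(\<lambda>x::int\<Rightarrow>'a. \<lambda>i. x (i + m)) -` A \<inter> space seq_space \<in> sets seq_space"
    by (rule measurable_sets[OF shift_meas assms])
  then show ?thesis by (simp add: space_seq sets_P)
qed

lemma N0_null:
  assumes d: "d*d = (1::int)"
  shows "{x::int\<Rightarrow>'a. \<forall>t::nat\<ge>1. \<not>(\<forall>l<k. x (d*int t - int l) = x (- int l))} \<in> null_sets P"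
proof -
  define N0 where "N0 = {x::int\<Rightarrow>'a. \<forall>t::nat\<ge>1. \<not>(\<forall>l<k. x (d*int t - int l) = x (- int l))}"
  define W where "W = {w::'a list. set w \<subseteq> UNIV \<and> length w = k}"
  define C where "C w = N0 \<inter> {x. \<forall>l<k. x (- int l) = w ! l}" for w
  have finW: "finite W" unfolding W_def by (rule finite_lists_length_eq) simp
  have C_meas: "C w \<in> sets seq_space" for w
  proof -
    have "C w = {x\<in>space seq_space. (\<forall>t::nat\<ge>1. \<not>(\<forall>l<k. x (d*int t - int l) = x (- int l))) \<and> (\<forall>l<k. x (- int l) = w ! l)}"
      by (auto simp: C_def N0_def space_seq)
    also have "\<dots> \<in> sets seq_space" unfolding seq_space_def by measurable
    finally show ?thesis .
  qed
  have C_null: "C w \<in> null_sets P" for w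
  proof -
    define D where "D m = (\<lambda>x::int\<Rightarrow>'a. \<lambda>i. x (i + d * int m)) -` C w" for m::nat
    have D_meas: "D m \<in> sets P" for m unfolding D_def by (rule pre_sets[OF C_meas])
    have D_em: "measure P (D m) = measure P (C w)" for m
      unfolding D_def measure_def using stat_em[OF C_meas] by simp
    have key: "D m \<inter> D m' = {}" if mm: "m < m'" for m m'
    proof (rule equals0I)
      fix x assume x: "x \<in> D m \<inter> D m'"
      define y where "y = (\<lambda>i. x (i + d * int m))"
      have yN: "y \<in> N0" and w1: "\<forall>l<k. y (- int l) = w ! l"
        using x unfolding D_def C_def y_def by auto
      have w2: "\<forall>l<k. x (- int l + d * int m') = w ! l"
        using x unfolding D_def C_def by auto
      have "\<forall>l<k. y (d * int (m' - m) - int l) = y (- int l)"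
      proof (intro allI impI)
        fix l assume l: "l < k"
        have eq: "d * int (m' - m) - int l + d * int m = - int l + d * int m'"
          using mm by (simp add: of_nat_diff algebra_simps)
        have "y (d * int (m' - m) - int l) = x (- int l + d * int m')"
          unfolding y_def by (simp only: eq)
        then show "y (d * int (m' - m) - int l) = y (- int l)" using w1 w2 l by simp
      qed
      moreover have "1 \<le> m' - m" using mm by simp
      ultimately show False using yN unfolding N0_def by blast
    qed
    have disj: "disjoint_family D"
      unfolding disjoint_family_on_def
    proof (intro ballI impI)
      fix m m' :: nat assume "m \<noteq> m'"
      then show "D m \<inter> D m' = {}"
        using key[of m m'] key[of m' m] by (cases "m < m'") (auto simp: Int_commute)
    qed
    have "(\<lambda>m. measure P (D m)) sums measure P (\<Union>m. D m)"
      by (rule finite_measure_UNION) (use D_meas disj in auto)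
    then have "summable (\<lambda>m::nat. measure P (C w))" using D_em by (simp add: sums_iff)
    then have "(\<lambda>m::nat. measure P (C w)) \<longlonglongrightarrow> 0" by (rule summable_LIMSEQ_zero)
    then have "measure P (C w) = 0" by (simp add: LIMSEQ_const_iff)
    moreover have "C w \<in> sets P" using C_meas sets_P by simp
    ultimately show ?thesis by (simp add: emeasure_eq_measure null_setsI)
  qed
  have "N0 = (\<Union>w\<in>W. C w)"
  proof
    show "N0 \<subseteq> (\<Union>w\<in>W. C w)"
    proof
      fix x assume x: "x \<in> N0"
      let ?w = "map (\<lambda>l. x (- int l)) [0..<k]"
      have "?w \<in> W" unfolding W_def by simp
      moreover have "x \<in> C ?w" using x unfolding C_def by simp
      ultimately show "x \<in> (\<Union>w\<in>W. C w)" by blast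
    qed
  qed (auto simp: C_def)
  also have "\<dots> \<in> null_sets P"
    by (rule null_sets_UN') (use finW C_null in \<open>auto intro: countable_finite\<close>)
  finally show ?thesis unfolding N0_def .
qed

lemma io_AE:
  assumes d: "d*d = (1::int)"
  shows "AE x in P. \<forall>N. \<exists>t>N. \<forall>l<k. x (p + d * int t - int l) = x (p - int l)"
proof (rule AE_I')
  define N0 where "N0 = {x::int\<Rightarrow>'a. \<forall>t::nat\<ge>1. \<not>(\<forall>l<k. x (d*int t - int l) = x (- int l))}"
  have N0n: "N0 \<in> null_sets P" unfolding N0_def by (rule N0_null[OF d])
  have N0s: "N0 \<in> sets seq_space" using N0n sets_P by (auto simp: null_sets_def)
  show "(\<Union>q::int. (\<lambda>x i. x (i + q)) -` N0) \<in> null_sets P"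
  proof (rule null_sets_UN)
    fix q :: int
    have "emeasure P ((\<lambda>x i. x (i + q)) -` N0) = emeasure P N0" by (rule stat_em[OF N0s])
    then show "(\<lambda>x i. x (i + q)) -` N0 \<in> null_sets P"
      using N0n pre_sets[OF N0s] by (auto simp: null_sets_def)
  qed
  show "{x \<in> space P. \<not> (\<forall>N. \<exists>t>N. \<forall>l<k. x (p + d * int t - int l) = x (p - int l))}
      \<subseteq> (\<Union>q::int. (\<lambda>x i. x (i + q)) -` N0)"
  proof
    fix x assume "x \<in> {x \<in> space P. \<not> (\<forall>N. \<exists>t>N. \<forall>l<k. x (p + d * int t - int l) = x (p - int l))}"
    then obtain N where N: "\<And>t. t > N \<Longrightarrow> \<not> (\<forall>l<k. x (p + d * int t - int l) = x (p - int l))"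
      by auto
    define B where "B t = (\<forall>l<k. x (p + d * int t - int l) = x (p - int l))" for t
    define S where "S = {t. t \<le> N \<and> B t}"
    have finS: "finite S" unfolding S_def by simp
    have "0 \<in> S" unfolding S_def B_def by simp
    define t0 where "t0 = Max S"
    have t0S: "t0 \<in> S" unfolding t0_def using finS \<open>0 \<in> S\<close> by (intro Max_in) auto
    have t0max: "t \<le> t0" if "t \<in> S" for t unfolding t0_def using finS that by simp
    define q where "q = p + d * int t0"
    have "(\<lambda>i. x (i + q)) \<in> N0"
      unfolding N0_def
    proof (intro CollectI allI impI notI)
      fix t :: nat assume t1: "1 \<le> t" and h: "\<forall>l<k. x (d * int t - int l + q) = x (- int l + q)"
      have "B (t0 + t)" unfolding B_def
      proof (intro allI impI)
        fix l assume l: "l < k"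
        have "x (p + d * int (t0 + t) - int l) = x (d * int t - int l + q)"
          unfolding q_def by (simp add: algebra_simps)
        also have "\<dots> = x (- int l + q)" using h l by simp
        also have "\<dots> = x (p + d * int t0 - int l)" unfolding q_def by (simp add: algebra_simps)
        also have "\<dots> = x (p - int l)" using t0S l unfolding S_def B_def by simp
        finally show "x (p + d * int (t0 + t) - int l) = x (p - int l)" .
      qed
      show False
      proof (cases "t0 + t \<le> N")
        case True
        then have "t0 + t \<in> S" using \<open>B (t0 + t)\<close> unfolding S_def by simp
        then show False using t0max[of "t0+t"] t1 by simp
      next
        case False
        then have "t0 + t > N" by simp
        from N[OF this] show False using \<open>B (t0 + t)\<close> unfolding B_def by blast
      qed
    qed
    then show "x \<in> (\<Union>q::int. (\<lambda>x i. x (i + q)) -` N0)" by blast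
  qed
qed


lemma main:
  fixes c :: int
  shows "distr P seq_space (\<lambda>x i. x (c - int (tau (\<lambda>i x. x i) k c j x) + i)) = P"
proof (cases "j = 0")
  case True
  have "(\<lambda>x::int\<Rightarrow>'a. \<lambda>i. x (c - int (tau (\<lambda>i x. x i) k c j x) + i)) = (\<lambda>x i. x (i + c))"
    using True by (simp add: add.commute)
  then show ?thesis using stat by simp
next
  case False
  define Xp where "Xp = (\<lambda>i (x::int\<Rightarrow>'a). x i)"
  define \<tau> where "\<tau> x = tau Xp k c j x" for x
  define T where "T x = (\<lambda>i. x (c - int (\<tau> x) + i))" for x
  define R where "R x t = reoccurs Xp k c t x" for x t
  define G where "G x t = (0 < t \<and> R x t \<and> cnt (R x) t = j - 1)" for x t
  define Rf where "Rf y u = (\<forall>l<k. y (int u - int l) = y (- int l))" for y :: "int \<Rightarrow> 'a" and u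
  define G' where "G' y t = (0 < t \<and> Rf y t \<and> cnt (Rf y) t = j - 1)" for y t
  define Sh where "Sh m x = (\<lambda>i. x (i + m))" for m and x :: "int \<Rightarrow> 'a"
  have eqT: "(\<lambda>x i. x (c - int (tau (\<lambda>i x. x i) k c j x) + i)) = T"
    unfolding T_def \<tau>_def Xp_def ..
  have T_m: "T \<in> seq_space \<rightarrow>\<^sub>M seq_space" unfolding T_def \<tau>_def Xp_def by (rule T_meas)
  have \<tau>_m: "\<tau> \<in> seq_space \<rightarrow>\<^sub>M count_space UNIV" unfolding \<tau>_def Xp_def by (rule tau_meas)
  have R_m: "Measurable.pred seq_space (\<lambda>x. R x t)" for t
    unfolding R_def reoccurs_def Xp_def seq_space_def by measurable
  have Rf_m: "Measurable.pred seq_space (\<lambda>x. Rf x t)" for t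
    unfolding Rf_def seq_space_def by measurable
  have G_m: "Measurable.pred seq_space (\<lambda>x. G x t)" for t
  proof -
    note [measurable] = R_m cnt_meas[where M=seq_space and Q="\<lambda>s x. R x s", OF R_m]
    show ?thesis unfolding G_def by measurable
  qed
  have G'_m: "Measurable.pred seq_space (\<lambda>x. G' x t)" for t
  proof -
    note [measurable] = Rf_m cnt_meas[where M=seq_space and Q="\<lambda>s x. Rf x s", OF Rf_m]
    show ?thesis unfolding G'_def by measurable
  qed
  have predset: "{x. Q x} \<in> sets P" if "Measurable.pred seq_space Q" for Q
  proof -
    have "{x\<in>space seq_space. Q x} \<in> sets seq_space" using that by measurable
    then show ?thesis by (simp add: space_seq sets_P)
  qed
  show ?thesis unfolding eqT
  proof (rule measure_eqI)
    show "sets (distr P seq_space T) = sets P" by (simp add: sets_P)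
    fix A assume "A \<in> sets (distr P seq_space T)"
    then have A: "A \<in> sets seq_space" by simp
    have AP: "A \<in> sets P" using A sets_P by simp
    have "emeasure (distr P seq_space T) A = emeasure P (T -` A)"
      using emeasure_distr[of T P seq_space A] T_m A by (simp add: meas_P space_P)
    define F where "F t = \<tau> -` {t} \<inter> Sh (c - int t) -` A" for t :: nat
    have TF: "T -` A = (\<Union>t. F t)"
    proof -
      have "T x = Sh (c - int (\<tau> x)) x" for x unfolding T_def Sh_def by (simp add: add.commute)
      then show ?thesis unfolding F_def by auto
    qed
    have F_s: "F t \<in> sets P" for t
    proof -
      have "\<tau> -` {t} \<inter> space seq_space \<in> sets seq_space" by (rule measurable_sets[OF \<tau>_m]) simp
      then have "\<tau> -` {t} \<in> sets P" by (simp add: space_seq sets_P)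
      moreover have "Sh (c - int t) -` A \<in> sets P" unfolding Sh_def by (rule pre_sets[OF A])
      ultimately show ?thesis unfolding F_def by auto
    qed
    have disjF: "disjoint_family F" unfolding disjoint_family_on_def
    proof (intro ballI impI)
      fix m m' :: nat assume "m \<noteq> m'" then show "F m \<inter> F m' = {}" unfolding F_def by blast
    qed
    have sumF: "emeasure P (\<Union>t. F t) = (\<Sum>t. emeasure P (F t))"
      by (rule suminf_emeasure[symmetric]) (use F_s disjF in auto)
    define F' where "F' t = {x. G x t} \<inter> Sh (c - int t) -` A" for t :: nat
    have F'_s: "F' t \<in> sets P" for t
      unfolding F'_def Sh_def using predset[OF G_m] pre_sets[OF A] by auto
    have m1: "(-1::int) * -1 = 1" by simp
    have AEb: "AE x in P. \<forall>N. \<exists>t>N. R x t"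
    proof (rule eventually_mono[OF io_AE[OF m1, where k=k and p=c]])
      fix x :: "int \<Rightarrow> 'a" assume h: "\<forall>N. \<exists>t>N. \<forall>l<k. x (c + -1 * int t - int l) = x (c - int l)"
      show "\<forall>N. \<exists>t>N. R x t" unfolding R_def reoccurs_def Xp_def using h by simp
    qed
    have FF': "emeasure P (F t) = emeasure P (F' t)" for t
    proof (rule emeasure_eq_AE)
      show "AE x in P. (x \<in> F t) = (x \<in> F' t)"
        using AEb
      proof (rule eventually_mono)
        fix x assume io: "\<forall>N. \<exists>t>N. R x t"
        have inv: "0 < \<tau> x \<and> R x (\<tau> x) \<and> cnt (R x) (\<tau> x) = j - 1"
          using tau_inv[of Xp k c x j] io False unfolding R_def \<tau>_def by auto
        have "\<tau> x = t \<longleftrightarrow> G x t"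
        proof
          assume "\<tau> x = t" then show "G x t" using inv unfolding G_def by simp
        next
          assume "G x t" then show "\<tau> x = t" using inv cnt_unique[of "\<tau> x" "R x" t] unfolding G_def by auto
        qed
        then show "(x \<in> F t) = (x \<in> F' t)" unfolding F_def F'_def by auto
      qed
    qed (use F_s F'_s in auto)
    define H where "H t = {y. G' y t} \<inter> A" for t :: nat
    have H_s: "H t \<in> sets P" for t
      unfolding H_def using predset[OF G'_m] AP by auto
    have F'H: "Sh (int t - c) -` F' t = H t" for t
    proof -
      have "G (Sh (int t - c) y) t = G' y t" for y
        using shift_G[of t k c y "j - 1"] unfolding G_def G'_def R_def Rf_def Sh_def Xp_def .
      moreover have "Sh (c - int t) (Sh (int t - c) y) = y" for y unfolding Sh_def by simp
      ultimately show ?thesis unfolding F'_def H_def by auto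
    qed
    have F'H2: "emeasure P (F' t) = emeasure P (H t)" for t
    proof -
      have "F' t \<in> sets seq_space" using F'_s sets_P by simp
      from stat_em[OF this, of "int t - c"] show ?thesis using F'H[of t] unfolding Sh_def by simp
    qed
    have disjH: "disjoint_family H" unfolding disjoint_family_on_def
    proof (intro ballI impI)
      fix m m' :: nat assume ne: "m \<noteq> m'"
      show "H m \<inter> H m' = {}"
      proof (rule equals0I)
        fix y assume "y \<in> H m \<inter> H m'"
        then have "G' y m" "G' y m'" by (auto simp: H_def)
        then show False using cnt_unique[of m "Rf y" m'] ne unfolding G'_def by auto
      qed
    qed
    have sumH: "(\<Sum>t. emeasure P (H t)) = emeasure P (\<Union>t. H t)"
      by (rule suminf_emeasure) (use H_s disjH in auto)
    have p1: "(1::int) * 1 = 1" by simp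
    have AEf: "AE y in P. \<forall>N. \<exists>t>N. Rf y t"
    proof (rule eventually_mono[OF io_AE[OF p1, where k=k and p=0]])
      fix y :: "int \<Rightarrow> 'a" assume h: "\<forall>N. \<exists>t>N. \<forall>l<k. y (0 + 1 * int t - int l) = y (0 - int l)"
      show "\<forall>N. \<exists>t>N. Rf y t" unfolding Rf_def using h by simp
    qed
    have "emeasure P (\<Union>t. H t) = emeasure P A"
    proof (rule emeasure_eq_AE)
      show "AE y in P. (y \<in> (\<Union>t. H t)) = (y \<in> A)"
        using AEf
      proof (rule eventually_mono)
        fix y assume "\<forall>N. \<exists>t>N. Rf y t"
        from cnt_exists[OF this, of "j - 1"] obtain t where "G' y t" unfolding G'_def by blast
        then show "(y \<in> (\<Union>t. H t)) = (y \<in> A)" unfolding H_def by auto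
      qed
    qed (use H_s AP in auto)
    show "emeasure (distr P seq_space T) A = emeasure P A"
      using \<open>emeasure (distr P seq_space T) A = emeasure P (T -` A)\<close> TF sumF FF' F'H2 sumH
        \<open>emeasure P (\<Union>t. H t) = emeasure P A\<close> by simp
  qed
qed
end


theorem lemma1:
  fixes M :: "'b measure" and X :: "int \<Rightarrow> 'b \<Rightarrow> 'a::finite"
    and k n j :: nat
  assumes "prob_space M"
    and "\<And>i. X i \<in> measurable M (count_space UNIV)"
    and "stationary M X"
    and "k \<ge> 1"
  shows "distr M seq_space (\<lambda>\<omega> i. X (int n - int (tau X k (int n) j \<omega>) + i) \<omega>)
           = distr M seq_space (\<lambda>\<omega> i. X i \<omega>)"
proof -
  define Y where "Y \<omega> = (\<lambda>i. X i \<omega>)" for \<omega>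
  have Y_m: "Y \<in> M \<rightarrow>\<^sub>M seq_space" unfolding Y_def seq_space_def
    by (rule measurable_PiM_single') (use assms(2) in auto)
  define P where "P = distr M seq_space Y"
  interpret spath P
  proof (rule spath.intro)
    show "prob_space P" unfolding P_def by (rule prob_space.prob_space_distr[OF assms(1) Y_m])
    show "sets P = sets seq_space" unfolding P_def by simp
    fix m :: int
    have "distr P seq_space (\<lambda>x i. x (i + m)) = distr M seq_space ((\<lambda>x i. x (i + m)) \<circ> Y)"
      unfolding P_def by (rule distr_distr[OF shift_meas Y_m])
    also have "\<dots> = distr M seq_space (\<lambda>\<omega> i. X (i + m) \<omega>)" unfolding Y_def comp_def ..
    also have "\<dots> = P" using assms(3) unfolding stationary_def P_def Y_def by simp
    finally show "distr P seq_space (\<lambda>x i. x (i + m)) = P" .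
  qed
  have "(\<lambda>\<omega> i. X (int n - int (tau X k (int n) j \<omega>) + i) \<omega>)
      = (\<lambda>x i. x (int n - int (tau (\<lambda>i x. x i) k (int n) j x) + i)) \<circ> Y"
    by (rule ext) (simp add: Y_def tau_transfer[of X])
  then have "distr M seq_space (\<lambda>\<omega> i. X (int n - int (tau X k (int n) j \<omega>) + i) \<omega>)
      = distr M seq_space ((\<lambda>x i. x (int n - int (tau (\<lambda>i x. x i) k (int n) j x) + i)) \<circ> Y)"
    by simp
  also have "\<dots> = distr P seq_space (\<lambda>x i. x (int n - int (tau (\<lambda>i x. x i) k (int n) j x) + i))"
    unfolding P_def by (rule distr_distr[OF T_meas Y_m, symmetric])
  also have "\<dots> = P" by (rule main)
  finally show ?thesis unfolding P_def Y_def .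
qed

end
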